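(* For every integer $n>2$ there exists a cake-cutting instance with $n$ players and an envy-free partial connected division $y$ such that, for every envy-free complete connected division $x$ of that instance, there are $n-2$ players $i$ with $u_i(y,i)=2\,u_i(x,i)$ (with $u_i(x,i)>0$), and the remaining two players $i$ satisfy $u_i(y,i)\ge u_i(x,i)$.
   Context: A cake is the interval $[0,1]$. There are $n$ players; each player $i$ has a valuation $v_i$, a nonatomic probability measure on $[0,1]$. A (connected) division $x$ is a sequence $(X_1,\dots,X_n)$ of pairwise disjoint open intervals of $[0,1]$ (possibly empty), $X_i$ being the piece of player $i$; it is complete if the union of the closures of the $X_i$ equals $[0,1]$, and partial otherwise. Write $u_i(x,j)=v_i(X_j)$. $x$ is envy-free if $u_i(x,i)\ge u_i(x,j)$ for all $i,j$. *)

theory Defs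
  imports "HOL-Probability.Probability"
begin

definition nonatomic :: "'a measure \<Rightarrow> bool" where
  "nonatomic M \<longleftrightarrow> \<not> (\<exists>A\<in>sets M. emeasure M A > 0 \<and>
      (\<forall>B\<in>sets M. B \<subseteq> A \<longrightarrow> emeasure M B = 0 \<or> emeasure M B = emeasure M A))"

definition valuation :: "real measure \<Rightarrow> bool" where
  "valuation M \<longleftrightarrow> prob_space M \<and> sets M = sets (restrict_space borel {0..1})
     \<and> nonatomic M"

definition open_subinterval :: "real set \<Rightarrow> bool" where
  "open_subinterval X \<longleftrightarrow> (\<exists>a b. 0 \<le> a \<and> b \<le> 1 \<and> X = {a<..<b})"

definition division :: "nat \<Rightarrow> (nat \<Rightarrow> real set) \<Rightarrow> bool" where
  "division n X \<longleftrightarrow> (\<forall>i<n. open_subinterval (X i)) \<and>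
     (\<forall>i<n. \<forall>j<n. i \<noteq> j \<longrightarrow> X i \<inter> X j = {})"

definition complete_div :: "nat \<Rightarrow> (nat \<Rightarrow> real set) \<Rightarrow> bool" where
  "complete_div n X \<longleftrightarrow> (\<Union>i<n. closure (X i)) = {0..1}"

definition util :: "(nat \<Rightarrow> real measure) \<Rightarrow> (nat \<Rightarrow> real set) \<Rightarrow> nat \<Rightarrow> nat \<Rightarrow> real" where
  "util v X i j = measure (v i) (X j)"

definition envy_free :: "nat \<Rightarrow> (nat \<Rightarrow> real measure) \<Rightarrow> (nat \<Rightarrow> real set) \<Rightarrow> bool" where
  "envy_free n v X \<longleftrightarrow> (\<forall>i<n. \<forall>j<n. util v X i i \<ge> util v X i j)"

end

theory Submission
  imports Defs
begin
definition L :: "real measure" where "L = restrict_space lborel {0..1}"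

lemma sets_L: "sets L = sets (restrict_space borel {0..1})"
  unfolding L_def by (rule sets_restrict_space_cong) simp

lemma space_L: "space L = {0..1}"
  unfolding L_def by (simp add: space_restrict_space)

lemma emeasure_L: "S \<in> sets borel \<Longrightarrow> S \<subseteq> {0..1} \<Longrightarrow> emeasure L S = emeasure lborel S"
  unfolding L_def by (subst emeasure_restrict_space) auto

lemma L_finite: "finite_measure L"
proof
  show "emeasure L (space L) \<noteq> \<infinity>" using emeasure_L[of "{0..1}"] by (simp add: space_L)
qed

interpretation Lf: finite_measure L by (rule L_finite)

lemma measure_L: "S \<in> sets borel \<Longrightarrow> S \<subseteq> {0..1} \<Longrightarrow> measure L S = measure lborel S"
  by (simp add: measure_def emeasure_L)

lemma sets_L_iff: "S \<in> sets L \<longleftrightarrow> S \<in> sets borel \<and> S \<subseteq> {0..1}"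
  unfolding sets_L by (auto simp: sets_restrict_space_iff)

definition VA :: "real set \<Rightarrow> real measure" where "VA A = uniform_measure L A"

lemma sets_VA[simp]: "sets (VA A) = sets L" by (simp add: VA_def)

lemma measure_VA:
  assumes A: "A \<in> sets L" and pos: "measure L A > 0" and S: "S \<in> sets L"
  shows "measure (VA A) S = measure L (A \<inter> S) / measure L A"
proof -
  have "emeasure (VA A) S = emeasure L (A \<inter> S) / emeasure L A"
    unfolding VA_def using A S by simp
  also have "\<dots> = ennreal (measure L (A \<inter> S)) / ennreal (measure L A)"
    by (simp add: Lf.emeasure_eq_measure)
  also have "\<dots> = ennreal (measure L (A \<inter> S) / measure L A)"
    using pos by (simp add: divide_ennreal)
  finally show ?thesis by (simp add: measure_def)
qed

lemma emeasure_VA: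
  assumes A: "A \<in> sets L" and pos: "measure L A > 0" and S: "S \<in> sets L"
  shows "emeasure (VA A) S = ennreal (measure L (A \<inter> S) / measure L A)"
proof -
  have "emeasure (VA A) S = emeasure L (A \<inter> S) / emeasure L A"
    unfolding VA_def using A S by simp
  also have "\<dots> = ennreal (measure L (A \<inter> S)) / ennreal (measure L A)"
    by (simp add: Lf.emeasure_eq_measure)
  also have "\<dots> = ennreal (measure L (A \<inter> S) / measure L A)"
    using pos by (simp add: divide_ennreal)
  finally show ?thesis .
qed

lemma lip_L:
  assumes D: "D \<in> sets L" and st: "s \<le> t"
  shows "measure L (D \<inter> {..t}) - measure L (D \<inter> {..s}) \<le> t - s"
proof -
  have m1: "D \<inter> {..t} \<in> sets L" "D \<inter> {..s} \<in> sets L" "D \<inter> {s<..t} \<in> sets L"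
    using D by (auto simp: sets_L_iff)
  have "D \<inter> {..t} = (D \<inter> {..s}) \<union> (D \<inter> {s<..t})" using st by auto
  then have "measure L (D \<inter> {..t}) = measure L (D \<inter> {..s}) + measure L (D \<inter> {s<..t})"
    using m1 by (subst Lf.finite_measure_Union[symmetric]) auto
  moreover have "measure L (D \<inter> {s<..t}) \<le> t - s"
  proof -
    have "D \<inter> {s<..t} \<subseteq> {0..1}" using D by (auto simp: sets_L_iff)
    then have "measure L (D \<inter> {s<..t}) = measure lborel (D \<inter> {s<..t})"
      using m1 by (intro measure_L) (auto simp: sets_L_iff)
    also have "\<dots> \<le> measure lborel {s<..t}"
      by (rule measure_mono_fmeasurable) (use m1 st in \<open>auto simp: sets_L_iff fmeasurable_def\<close>)
    also have "\<dots> = t - s" using st by simp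
    finally show ?thesis .
  qed
  ultimately show ?thesis by simp
qed

lemma nonatomic_VA:
  assumes A: "A \<in> sets L" and pos: "measure L A > 0"
  shows "nonatomic (VA A)"
  unfolding nonatomic_def
proof (rule notI, elim bexE conjE)
  fix S assume S: "S \<in> sets (VA A)" and Spos: "emeasure (VA A) S > 0"
    and H: "\<forall>B\<in>sets (VA A). B \<subseteq> S \<longrightarrow> emeasure (VA A) B = 0 \<or> emeasure (VA A) B = emeasure (VA A) S"
  have SL: "S \<in> sets L" using S by simp
  define D where "D = A \<inter> S"
  have DL: "D \<in> sets L" using A SL by (auto simp: D_def)
  define g where "g t = measure L (D \<inter> {..t})" for t
  have mpos: "measure L D > 0"
  proof -
    have "emeasure (VA A) S = ennreal (measure L D / measure L A)"
      using emeasure_VA[OF A pos SL] by (simp add: D_def)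
    with Spos have "measure L D / measure L A > 0"
      by (metis ennreal_eq_0_iff linorder_not_le not_gr_zero)
    with pos show ?thesis by (simp add: zero_less_divide_iff)
  qed
  have g0: "g 0 = 0"
  proof -
    have "D \<inter> {..0} \<subseteq> {0}" using DL by (auto simp: sets_L_iff)
    then have "measure L (D \<inter> {..0}) \<le> measure L {0}"
      by (intro Lf.finite_measure_mono) (auto simp: sets_L_iff)
    also have "measure L {0} = 0" by (subst measure_L) auto
    finally show ?thesis unfolding g_def by (simp add: measure_nonneg antisym)
  qed
  have g1: "g 1 = measure L D"
  proof -
    have "D \<inter> {..1} = D" using DL by (auto simp: sets_L_iff)
    then show ?thesis by (simp add: g_def)
  qed
  have cont: "continuous_on {0..1} g"
    unfolding continuous_on_iff
  proof (intro ballI allI impI)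
    fix x e :: real assume "e > 0"
    show "\<exists>d>0. \<forall>x'\<in>{0..1}. dist x' x < d \<longrightarrow> dist (g x') (g x) < e"
    proof (intro exI[of _ e] conjI ballI impI)
      fix x' assume "dist x' x < e"
      have mono: "g s \<le> g t" if "s \<le> t" for s t
        unfolding g_def by (rule Lf.finite_measure_mono) (use that DL in \<open>auto simp: sets_L_iff\<close>)
      show "dist (g x') (g x) < e"
      proof (cases "x' \<le> x")
        case True
        have "g x - g x' \<le> x - x'" using lip_L[OF DL True] by (simp add: g_def)
        then show ?thesis using mono[OF True] \<open>dist x' x < e\<close> by (simp add: dist_real_def)
      next
        case False
        then have F: "x \<le> x'" by simp
        have "g x' - g x \<le> x' - x" using lip_L[OF DL F] by (simp add: g_def)
        then show ?thesis using mono[OF F] \<open>dist x' x < e\<close> by (simp add: dist_real_def)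
      qed
    qed (fact \<open>e > 0\<close>)
  qed
  obtain t where t: "0 \<le> t" "t \<le> 1" "g t = measure L D / 2"
    using IVT'[of g 0 "measure L D / 2" 1] g0 g1 cont mpos by auto
  define B where "B = S \<inter> {..t}"
  have BL: "B \<in> sets L" using SL by (auto simp: B_def sets_L_iff)
  have AB: "A \<inter> B = D \<inter> {..t}" by (auto simp: B_def D_def)
  have eB: "emeasure (VA A) B = ennreal (measure L D / 2 / measure L A)"
    using emeasure_VA[OF A pos BL] AB t(3) unfolding g_def by simp
  have eS: "emeasure (VA A) S = ennreal (measure L D / measure L A)"
    using emeasure_VA[OF A pos SL] by (simp add: D_def)
  have "B \<subseteq> S" by (auto simp: B_def)
  with H BL have "emeasure (VA A) B = 0 \<or> emeasure (VA A) B = emeasure (VA A) S" by simp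
  then show False
    using eB eS mpos pos by (auto simp: divide_pos_pos)
qed

lemma valuation_VA:
  assumes A: "A \<in> sets L" and pos: "measure L A > 0"
  shows "valuation (VA A)"
  unfolding valuation_def
proof (intro conjI)
  show "prob_space (VA A)"
  proof (rule prob_spaceI)
    have sp: "space (VA A) = space L" by (simp add: VA_def)
    have "A \<subseteq> space L" using A by (rule sets.sets_into_space)
    then have "A \<inter> space L = A" by auto
    then show "emeasure (VA A) (space (VA A)) = 1"
      using emeasure_VA[OF A pos, of "space L"] pos by (simp add: sp)
  qed
  show "sets (VA A) = sets (restrict_space borel {0..1})" by (simp add: sets_L)
  show "nonatomic (VA A)" by (rule nonatomic_VA[OF A pos])
qed

lemma meas_sandwich:
  fixes p q :: real
  assumes "{p<..<q} \<subseteq> S" "S \<subseteq> {p..q}" "S \<in> sets borel"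
  shows "measure lborel S = max 0 (q - p)"
proof (cases "p \<le> q")
  case True
  have "emeasure lborel S \<le> emeasure lborel {p..q}" by (rule emeasure_mono) (use assms in auto)
  then have fin: "emeasure lborel S < \<top>" using True
    by (metis emeasure_lborel_Icc ennreal_less_top order.strict_trans1)
  have "measure lborel {p<..<q} \<le> measure lborel S"
    by (rule measure_mono_fmeasurable) (use assms True fin in \<open>auto simp: fmeasurable_def\<close>)
  moreover have "measure lborel S \<le> measure lborel {p..q}"
    by (rule measure_mono_fmeasurable) (use assms True in \<open>auto simp: fmeasurable_def\<close>)
  ultimately show ?thesis using True by simp
next
  case False
  then have "S = {}" using assms(2) by auto
  then show ?thesis using False by simp
qed

lemma meas_Icc_Ioo:
  fixes a b c d :: real
  assumes "0 \<le> c" "d \<le> 1"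
  shows "measure L ({c..d} \<inter> {a<..<b}) = max 0 (min b d - max a c)"
proof -
  have "measure L ({c..d} \<inter> {a<..<b}) = measure lborel ({c..d} \<inter> {a<..<b})"
    using assms by (intro measure_L) auto
  also have "\<dots> = max 0 (min b d - max a c)"
    by (rule meas_sandwich) auto
  finally show ?thesis .
qed

lemma meas_Icc_Icc:
  fixes a b c d :: real
  assumes "0 \<le> c" "d \<le> 1"
  shows "measure L ({c..d} \<inter> {a..b}) = max 0 (min b d - max a c)"
proof -
  have "measure L ({c..d} \<inter> {a..b}) = measure lborel ({c..d} \<inter> {a..b})"
    using assms by (intro measure_L) auto
  also have "\<dots> = max 0 (min b d - max a c)"
    by (rule meas_sandwich) auto
  finally show ?thesis .
qed

lemma meas_two:
  fixes x y :: real
  assumes "0 \<le> x" "x < y" "y \<le> 1" "S \<in> sets L"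
  shows "measure L (({0..x} \<union> {y..1}) \<inter> S) = measure L ({0..x} \<inter> S) + measure L ({y..1} \<inter> S)"
proof -
  have "({0..x} \<union> {y..1}) \<inter> S = ({0..x} \<inter> S) \<union> ({y..1} \<inter> S)" by auto
  moreover have "({0..x} \<inter> S) \<inter> ({y..1} \<inter> S) = {}" using assms by auto
  moreover have "{0..x} \<inter> S \<in> sets L" "{y..1} \<inter> S \<in> sets L" using assms by (auto simp: sets_L_iff)
  ultimately show ?thesis by (simp add: Lf.finite_measure_Union)
qed

lemma osi_sets: "open_subinterval X \<Longrightarrow> X \<in> sets L"
  unfolding open_subinterval_def sets_L_iff by auto

lemma osi_closure:
  assumes "open_subinterval X"
  obtains a b where "0 \<le> a" "b \<le> 1" "X = {a<..<b}"
  using assms unfolding open_subinterval_def by auto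

lemma tiling:
  assumes div: "division n x" and cpl: "complete_div n x"
    and t: "0 \<le> t" "t \<le> 1" and tn: "\<forall>i<n. t \<notin> x i" and D: "D \<in> sets L"
  shows "measure L (D \<inter> {..t}) = (\<Sum>i\<in>{i. i<n \<and> x i \<subseteq> {..t}}. measure L (D \<inter> x i))"
proof -
  define I where "I = {i. i<n \<and> x i \<subseteq> {..t}}"
  define U where "U = (\<Union>i\<in>I. x i)"
  define E where "E = insert t (\<Union>i<n. closure (x i) - x i)"
  have osi: "\<And>i. i<n \<Longrightarrow> open_subinterval (x i)" using div by (simp add: division_def)
  have xL: "\<And>i. i<n \<Longrightarrow> x i \<in> sets L" using osi osi_sets by blast
  have fin: "finite I" by (simp add: I_def)
  have Efin: "finite E"
  proof -
    have "finite (closure (x i) - x i)" if i: "i<n" for i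
    proof -
      obtain a b where ab: "x i = {a<..<b}" using osi[OF i] by (elim osi_closure)
      show ?thesis
      proof (cases "a < b")
        case True
        then have "closure (x i) - x i \<subseteq> {a,b}" by (auto simp: ab)
        then show ?thesis by (rule finite_subset) simp
      next
        case False
        then show ?thesis by (simp add: ab)
      qed
    qed
    then show ?thesis by (simp add: E_def)
  qed
  have E01: "E \<subseteq> {0..1}"
  proof -
    have "closure (x i) \<subseteq> {0..1}" if i: "i<n" for i
    proof -
      obtain a b where ab: "0 \<le> a" "b \<le> 1" "x i = {a<..<b}" using osi[OF i] by (elim osi_closure)
      have "x i \<subseteq> {0..1}" using ab by auto
      then show ?thesis by (simp add: closure_minimal)
    qed
    then show ?thesis using t by (auto simp: E_def)
  qed
  have EL: "E \<in> sets L" using Efin E01 by (auto simp: sets_L_iff intro: countable_finite sets.countable)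
  have E0: "measure L E = 0"
  proof -
    have "measure L E = measure lborel E" using Efin E01 by (intro measure_L) (auto intro: countable_finite sets.countable)
    also have "\<dots> = 0" using Efin by (simp add: measure_def emeasure_lborel_countable countable_finite)
    finally show ?thesis .
  qed
  have UL: "D \<inter> U \<in> sets L" using D xL fin by (auto simp: U_def I_def)
  have sub1: "D \<inter> U \<subseteq> D \<inter> {..t}" by (auto simp: U_def I_def)
  have sub2: "D \<inter> {..t} \<subseteq> (D \<inter> U) \<union> E"
  proof
    fix p assume p: "p \<in> D \<inter> {..t}"
    have "p \<in> {0..1}" using p D by (auto simp: sets_L_iff)
    then have "p \<in> (\<Union>i<n. closure (x i))" using cpl by (simp add: complete_div_def)
    then obtain i where i: "i<n" "p \<in> closure (x i)" by auto
    obtain a b where ab: "0 \<le> a" "b \<le> 1" "x i = {a<..<b}" using osi[OF i(1)] by (elim osi_closure)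
    show "p \<in> (D \<inter> U) \<union> E"
    proof (cases "x i \<subseteq> {..t}")
      case True
      then have "i \<in> I" using i by (simp add: I_def)
      then show ?thesis using p i by (cases "p \<in> x i") (auto simp: U_def E_def)
    next
      case False
      then obtain q where q: "q \<in> x i" "q > t" by (auto simp: subset_eq not_le)
      have "t \<notin> x i" using tn i by auto
      then have "t \<le> a" using q ab by auto
      have "a < b" using q ab by auto
      then have "closure (x i) = {a..b}" using ab by simp
      then have "p = t" using i p \<open>t \<le> a\<close> by auto
      then show ?thesis by (simp add: E_def)
    qed
  qed
  have DtL: "D \<inter> {..t} \<in> sets L" using D by (auto simp: sets_L_iff)
  have "measure L (D \<inter> {..t}) \<le> measure L ((D \<inter> U) \<union> E)"
    by (rule Lf.finite_measure_mono[OF sub2]) (use UL EL in auto)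
  also have "\<dots> = measure L (D \<inter> U)"
    by (rule measure_Un_null_set[OF UL]) (use EL E0 in \<open>simp add: null_sets_def Lf.emeasure_eq_measure\<close>)
  finally have le: "measure L (D \<inter> {..t}) \<le> measure L (D \<inter> U)" .
  have ge: "measure L (D \<inter> U) \<le> measure L (D \<inter> {..t})"
    by (rule Lf.finite_measure_mono[OF sub1 DtL])
  have "measure L (D \<inter> U) = measure L (\<Union>i\<in>I. D \<inter> x i)" by (simp add: U_def)
  also have "\<dots> = (\<Sum>i\<in>I. measure L (D \<inter> x i))"
  proof (rule measure_finite_Union[OF fin])
    show "(\<lambda>i. D \<inter> x i) ` I \<subseteq> sets L" using D xL by (auto simp: I_def)
    show "disjoint_family_on (\<lambda>i. D \<inter> x i) I"
      using div by (auto simp: disjoint_family_on_def I_def division_def)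
    show "\<And>i. i \<in> I \<Longrightarrow> emeasure L (D \<inter> x i) \<noteq> \<infinity>" by simp
  qed
  finally show ?thesis using le ge by (simp add: I_def)
qed

definition uu :: "nat \<Rightarrow> real" where "uu n = 1 / (2 * real n + 1)"
definition AP :: "nat \<Rightarrow> nat \<Rightarrow> real set" where
  "AP n k = {(2 * real k + 1) * uu n .. (2 * real k + 3) * uu n}"
definition AC :: "nat \<Rightarrow> real set" where
  "AC n = {(2 * real n - 2) * uu n .. (2 * real n - 1) * uu n}"
definition AB :: "nat \<Rightarrow> real set" where
  "AB n = {0 .. (2 * real n - 2) * uu n} \<union> {(2 * real n - 1) * uu n .. 1}"
definition vv :: "nat \<Rightarrow> nat \<Rightarrow> real measure" where
  "vv n i = (if i < n - 2 then VA (AP n i) else if i = n - 2 then VA (AC n) else VA (AB n))"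

lemma maxmin_simp: "0 \<le> lo \<Longrightarrow> lo \<le> hi \<Longrightarrow> hi \<le> 1 \<Longrightarrow> max 0 (min (2::real) hi - max (-1) lo) = hi - lo"
  by (simp add: max_def min_def)

lemma uu_pos: "uu n > 0" by (simp add: uu_def)
lemma uu_one: "(2 * real n + 1) * uu n = 1" by (simp add: uu_def)

lemma AP_sets: assumes "k < n - 2" shows "AP n k \<in> sets L"
proof -
  have u: "uu n > 0" "(2 * real n + 1) * uu n = 1" by (rule uu_pos, rule uu_one)
  have "real k + 3 \<le> real n" using assms by linarith
  then have "(2 * real k + 3) * uu n \<le> (2 * real n + 1) * uu n"
    using u by (intro mult_right_mono) auto
  then show ?thesis using u by (auto simp: AP_def sets_L_iff)
qed

lemma AP_meas: "measure L (AP n k \<inter> S) = measure L ({(2 * real k + 1) * uu n .. (2 * real k + 3) * uu n} \<inter> S)"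
  by (simp add: AP_def)

lemma meas_AP_Ioo:
  assumes "k < n - 2"
  shows "measure L (AP n k \<inter> {a<..<b}) = max 0 (min b ((2 * real k + 3) * uu n) - max a ((2 * real k + 1) * uu n))"
proof -
  have u: "uu n > 0" "(2 * real n + 1) * uu n = 1" by (rule uu_pos, rule uu_one)
  have "real k + 3 \<le> real n" using assms by linarith
  then have "(2 * real k + 3) * uu n \<le> (2 * real n + 1) * uu n"
    using u by (intro mult_right_mono) auto
  then show ?thesis unfolding AP_def using u by (intro meas_Icc_Ioo) auto
qed

lemma AP_measure: assumes "k < n - 2" shows "measure L (AP n k) = 2 * uu n"
proof -
  have "AP n k \<inter> {-1<..<2} = AP n k"
  proof -
    have u: "uu n > 0" "(2 * real n + 1) * uu n = 1" by (rule uu_pos, rule uu_one)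
    have "AP n k \<subseteq> {0..1}" using AP_sets[OF assms] by (simp add: sets_L_iff)
    then show ?thesis by auto
  qed
  then have "measure L (AP n k) = measure L (AP n k \<inter> {-1<..<2})" by simp
  also have "\<dots> = 2 * uu n"
  proof -
    have u: "uu n > 0" "(2 * real n + 1) * uu n = 1" by (rule uu_pos, rule uu_one)
    have "(2 * real k + 3) * uu n \<le> 1" using AP_sets[OF assms] u
      by (auto simp: AP_def sets_L_iff)
    moreover have "0 \<le> (2 * real k + 1) * uu n" using u by simp
    moreover have "(2 * real k + 1) * uu n \<le> (2 * real k + 3) * uu n" using u by simp
    ultimately have "max 0 (min 2 ((2 * real k + 3) * uu n) - max (-1) ((2 * real k + 1) * uu n)) = (2 * real k + 3) * uu n - (2 * real k + 1) * uu n"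
      by (intro maxmin_simp)
    also have "\<dots> = 2 * uu n" by (simp add: algebra_simps)
    finally show ?thesis using meas_AP_Ioo[OF assms, of "-1" 2] by simp
  qed
  finally show ?thesis .
qed

lemma uf: assumes "n > 2" shows "0 < uu n" "uu n + uu n * (real n * 2) = 1" "3 * uu n \<le> uu n * real n"
proof -
  show "0 < uu n" by (rule uu_pos)
  show "uu n + uu n * (real n * 2) = 1" using uu_one[of n] by (simp add: algebra_simps)
  have "3 \<le> real n" using assms by linarith
  then show "3 * uu n \<le> uu n * real n" using uu_pos[of n] by (simp add: mult.commute)
qed

lemma AC_sets: assumes "n > 2" shows "AC n \<in> sets L"
proof -
  have u: "uu n > 0" "(2 * real n + 1) * uu n = 1" by (rule uu_pos, rule uu_one)
  have "0 \<le> (2 * real n - 2) * uu n" using assms u by simp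
  moreover have "(2 * real n - 1) * uu n \<le> 1" using u by (simp add: algebra_simps)
  ultimately show ?thesis by (auto simp: AC_def sets_L_iff)
qed

lemma meas_AC_Ioo:
  assumes "n > 2"
  shows "measure L (AC n \<inter> {a<..<b}) = max 0 (min b ((2 * real n - 1) * uu n) - max a ((2 * real n - 2) * uu n))"
proof -
  have u: "uu n > 0" "(2 * real n + 1) * uu n = 1" by (rule uu_pos, rule uu_one)
  have "0 \<le> (2 * real n - 2) * uu n" using assms u by simp
  moreover have "(2 * real n - 1) * uu n \<le> 1" using u by (simp add: algebra_simps)
  ultimately show ?thesis unfolding AC_def by (intro meas_Icc_Ioo) auto
qed

lemma AC_measure: assumes "n > 2" shows "measure L (AC n) = uu n"
proof -
  have u: "uu n > 0" "(2 * real n + 1) * uu n = 1" by (rule uu_pos, rule uu_one)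
  have "AC n \<subseteq> {0..1}" using AC_sets[OF assms] by (simp add: sets_L_iff)
  then have "AC n \<inter> {-1<..<2} = AC n" by auto
  then have "measure L (AC n) = measure L (AC n \<inter> {-1<..<2})" by simp
  also have "\<dots> = uu n"
  proof -
    have "0 \<le> (2 * real n - 2) * uu n" using assms u by simp
    moreover have "(2 * real n - 1) * uu n \<le> 1" using u by (simp add: algebra_simps)
    moreover have "(2 * real n - 2) * uu n \<le> (2 * real n - 1) * uu n" using u by simp
    ultimately have "max 0 (min 2 ((2 * real n - 1) * uu n) - max (-1) ((2 * real n - 2) * uu n)) = (2 * real n - 1) * uu n - (2 * real n - 2) * uu n"
      by (intro maxmin_simp)
    also have "\<dots> = uu n" by (simp add: algebra_simps)
    finally show ?thesis using meas_AC_Ioo[OF assms, of "-1" 2] by simp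
  qed
  finally show ?thesis .
qed

lemma AB_sets: assumes "n > 2" shows "AB n \<in> sets L"
proof -
  have "0 \<le> (2 * real n - 2) * uu n" "(2 * real n - 2) * uu n \<le> 1" "0 \<le> (2 * real n - 1) * uu n"
    using uf[OF assms] by (simp_all add: algebra_simps)
  then show ?thesis by (auto simp: AB_def sets_L_iff)
qed

lemma meas_AB:
  assumes "n > 2" "S \<in> sets L"
  shows "measure L (AB n \<inter> S) = measure L ({0 .. (2 * real n - 2) * uu n} \<inter> S) + measure L ({(2 * real n - 1) * uu n .. 1} \<inter> S)"
proof -
  have u: "uu n > 0" "(2 * real n + 1) * uu n = 1" by (rule uu_pos, rule uu_one)
  have "0 \<le> (2 * real n - 2) * uu n" using assms u by simp
  moreover have "(2 * real n - 1) * uu n \<le> 1" using u by (simp add: algebra_simps)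
  moreover have "(2 * real n - 2) * uu n < (2 * real n - 1) * uu n" using u by (simp add: algebra_simps)
  ultimately show ?thesis unfolding AB_def by (intro meas_two assms(2)) auto
qed

lemma meas_AB_Ioo:
  assumes "n > 2"
  shows "measure L (AB n \<inter> {a<..<b}) = max 0 (min b ((2 * real n - 2) * uu n) - max a 0) + max 0 (min b 1 - max a ((2 * real n - 1) * uu n))"
proof -
  have u: "uu n > 0" "(2 * real n + 1) * uu n = 1" by (rule uu_pos, rule uu_one)
  have h1: "0 \<le> (2 * real n - 2) * uu n" using assms u by simp
  have h2: "(2 * real n - 1) * uu n \<ge> 0" using assms u by simp
  have "measure L (AB n \<inter> {a<..<b}) = measure L (AB n \<inter> ({0..1} \<inter> {a<..<b}))"
    using AB_sets[OF assms] by (simp add: sets_L_iff Int_absorb1 Int_assoc[symmetric] Int_absorb2)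
  also have "\<dots> = measure L ({0 .. (2 * real n - 2) * uu n} \<inter> ({0..1} \<inter> {a<..<b})) + measure L ({(2 * real n - 1) * uu n .. 1} \<inter> ({0..1} \<inter> {a<..<b}))"
    by (rule meas_AB[OF assms]) (auto simp: sets_L_iff)
  also have "\<dots> = measure L ({0 .. (2 * real n - 2) * uu n} \<inter> {a<..<b}) + measure L ({(2 * real n - 1) * uu n .. 1} \<inter> {a<..<b})"
  proof -
    have "(2 * real n - 2) * uu n \<le> 1" using u by (simp add: algebra_simps)
    then have "{0 .. (2 * real n - 2) * uu n} \<inter> ({0..1} \<inter> {a<..<b}) = {0 .. (2 * real n - 2) * uu n} \<inter> {a<..<b}" by auto
    moreover have "{(2 * real n - 1) * uu n .. 1} \<inter> ({0..1} \<inter> {a<..<b}) = {(2 * real n - 1) * uu n .. 1} \<inter> {a<..<b}" using h2 by auto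
    ultimately show ?thesis by simp
  qed
  also have "\<dots> = max 0 (min b ((2 * real n - 2) * uu n) - max a 0) + max 0 (min b 1 - max a ((2 * real n - 1) * uu n))"
  proof -
    have "(2 * real n - 2) * uu n \<le> 1" using u by (simp add: algebra_simps)
    then show ?thesis using h1 h2 by (subst meas_Icc_Ioo, simp, simp)+ simp
  qed
  finally show ?thesis .
qed

lemma AB_measure: assumes "n > 2" shows "measure L (AB n) = 2 * real n * uu n"
proof -
  have u: "uu n > 0" "(2 * real n + 1) * uu n = 1" by (rule uu_pos, rule uu_one)
  have "AB n \<subseteq> {0..1}" using AB_sets[OF assms] by (simp add: sets_L_iff)
  then have "AB n \<inter> {-1<..<2} = AB n" by auto
  then have "measure L (AB n) = measure L (AB n \<inter> {-1<..<2})" by simp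
  also have "\<dots> = 2 * real n * uu n"
  proof -
    have "0 \<le> (2 * real n - 2) * uu n" using assms u by simp
    moreover have "(2 * real n - 1) * uu n \<le> 1" using u by (simp add: algebra_simps)
    moreover have "(2 * real n - 1) * uu n \<ge> 0" using u assms by simp
    ultimately have m1: "max 0 (min 2 ((2 * real n - 2) * uu n) - max (-1) 0) = (2 * real n - 2) * uu n - 0"
      and m2: "max 0 (min 2 1 - max (-1) ((2 * real n - 1) * uu n)) = 1 - (2 * real n - 1) * uu n"
      using u by (intro maxmin_simp; simp add: algebra_simps)+
    have "(2 * real n - 2) * uu n - 0 + (1 - (2 * real n - 1) * uu n) = 2 * real n * uu n"
      using u(2) by (simp add: algebra_simps)
    then show ?thesis using meas_AB_Ioo[OF assms, of "-1" 2] m1 m2 by simp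
  qed
  finally show ?thesis .
qed

lemma meas_AB_Iic:
  assumes "n > 2" "0 \<le> t" "t \<le> (2 * real n - 2) * uu n"
  shows "measure L (AB n \<inter> {..t}) = t"
proof -
  have u: "uu n > 0" "(2 * real n + 1) * uu n = 1" by (rule uu_pos, rule uu_one)
  have "(2 * real n - 2) * uu n < (2 * real n - 1) * uu n" using u by (simp add: algebra_simps)
  then have "AB n \<inter> {..t} = {0..t}" using assms by (auto simp: AB_def)
  moreover have "t \<le> 1" using assms(3) uf[OF assms(1)] by (simp add: algebra_simps)
  ultimately show ?thesis using assms by (simp add: measure_L)
qed

lemma vv_cases:
  assumes "n > 2"
  shows "k < n - 2 \<Longrightarrow> vv n k = VA (AP n k)" "vv n (n - 2) = VA (AC n)" "vv n (n - 1) = VA (AB n)"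
  using assms by (auto simp: vv_def)

lemma vv_val: assumes "n > 2" "i < n" shows "valuation (vv n i)"
proof -
  have u: "uu n > 0" by (rule uu_pos)
  consider "i < n - 2" | "i = n - 2" | "i = n - 1" using assms by linarith
  then show ?thesis
  proof cases
    case 1 then show ?thesis using AP_sets[OF 1] AP_measure[OF 1] u
      by (simp add: vv_def valuation_VA)
  next
    case 2 then show ?thesis using AC_sets[OF assms(1)] AC_measure[OF assms(1)] u
      by (simp add: vv_def valuation_VA)
  next
    case 3
    have "0 < 2 * real n * uu n" using u assms by simp
    then show ?thesis using 3 AB_sets[OF assms(1)] AB_measure[OF assms(1)] assms
      by (simp add: vv_def valuation_VA)
  qed
qed

lemma uP:
  assumes "k < n - 2" "S \<in> sets L"
  shows "measure (vv n k) S = measure L (AP n k \<inter> S) / (2 * uu n)"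
  using assms AP_sets[OF assms(1)] AP_measure[OF assms(1)] uu_pos[of n]
  by (simp add: vv_def measure_VA)

lemma uC:
  assumes "n > 2" "S \<in> sets L"
  shows "measure (vv n (n - 2)) S = measure L (AC n \<inter> S) / uu n"
  using assms AC_sets[OF assms(1)] AC_measure[OF assms(1)] uu_pos[of n]
  by (simp add: vv_def measure_VA)

lemma uB:
  assumes "n > 2" "S \<in> sets L"
  shows "measure (vv n (n - 1)) S = measure L (AB n \<inter> S) / (2 * real n * uu n)"
proof -
  have "0 < 2 * real n * uu n" using uu_pos[of n] assms by simp
  then show ?thesis unfolding vv_cases(3)[OF assms(1)] using assms AB_sets[OF assms(1)] AB_measure[OF assms(1)]
    by (simp add: measure_VA)
qed

lemma psum:
  assumes "valuation M" "X \<in> sets M" "Y \<in> sets M" "X \<inter> Y = {}"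
  shows "measure M X + measure M Y \<le> 1"
proof -
  interpret prob_space M using assms(1) by (simp add: valuation_def)
  have "measure M X + measure M Y = measure M (X \<union> Y)"
    using assms by (simp add: finite_measure_Union)
  also have "\<dots> \<le> 1" by (rule prob_le_1)
  finally show ?thesis .
qed

lemma sum_eq_bound:
  fixes f :: "nat \<Rightarrow> real"
  assumes "(\<Sum>j<n. f j) = real n * c" "\<forall>j<n. f j \<le> c"
  shows "\<forall>j<n. f j = c"
proof -
  have "(\<Sum>j<n. c - f j) = 0" using assms(1) by (simp add: sum_subtractf)
  moreover have "\<forall>j\<in>{..<n}. 0 \<le> c - f j" using assms(2) by simp
  ultimately have "\<forall>j\<in>{..<n}. c - f j = 0" using sum_nonneg_eq_0_iff[of "{..<n}" "\<lambda>j. c - f j"] by simp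
  then show ?thesis by simp
qed

lemma ar1:
  fixes u K a b :: real
  assumes "0 < u" "2*K \<le> a" "a < 2*K + 2*u" "a + 2*u < b"
  shows "min b (2*K + 3*u) - max a (2*K + u) > u"
  using assms by (auto simp: min_def max_def)

lemma sets_vv[simp]: "sets (vv n i) = sets L" by (simp add: vv_def)

lemma xstruct:
  assumes n2: "n > 2" and div: "division n x" and cpl: "complete_div n x" and ef0: "envy_free n (vv n) x"
  shows "(\<forall>k<n-2. measure (vv n k) (x k) = 1/2) \<and> measure (vv n (n-1)) (x (n-1)) = 1 / real n"
proof -
  define u where "u = uu n"
  have u0: "0 < u" and u1: "u + u * (real n * 2) = 1" and u3: "3 * u \<le> u * real n"
    using uf[OF n2] by (simp_all add: u_def)
  have osi: "\<And>i. i<n \<Longrightarrow> open_subinterval (x i)" using div by (simp add: division_def)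
  have "\<forall>i. \<exists>a b. i < n \<longrightarrow> 0 \<le> a \<and> b \<le> 1 \<and> x i = {a<..<b}"
    using osi by (auto simp: open_subinterval_def)
  then obtain a b where ab: "\<And>i. i < n \<Longrightarrow> 0 \<le> a i \<and> b i \<le> 1 \<and> x i = {a i<..<b i}"
    by metis
  have xL: "\<And>i. i<n \<Longrightarrow> x i \<in> sets L" using osi osi_sets by blast
  have ef: "\<And>i j. i<n \<Longrightarrow> j<n \<Longrightarrow> measure (vv n i) (x j) \<le> measure (vv n i) (x i)"
    using ef0 by (simp add: envy_free_def util_def)
  have disj: "\<And>i j. i<n \<Longrightarrow> j<n \<Longrightarrow> i \<noteq> j \<Longrightarrow> x i \<inter> x j = {}"
    using div by (simp add: division_def)
  have ps: "\<And>i j. i<n \<Longrightarrow> j<n \<Longrightarrow> i \<noteq> j \<Longrightarrow> measure (vv n i) (x i) + measure (vv n i) (x j) \<le> 1"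
    using psum vv_val[OF n2] xL disj by simp
  define mB where "mB j = measure L (AB n \<inter> x j)" for j
  have mBf: "\<And>j. j<n \<Longrightarrow> mB j = max 0 (min (b j) ((2 * real n - 2) * u) - max (a j) 0) + max 0 (min (b j) 1 - max (a j) ((2 * real n - 1) * u))"
    unfolding mB_def u_def using ab meas_AB_Ioo[OF n2] by simp
  have uBx: "\<And>j. j<n \<Longrightarrow> measure (vv n (n-1)) (x j) = mB j / (2 * real n * u)"
    unfolding mB_def u_def using uB[OF n2] xL by simp
  have n1: "n - 1 < n" "n - 2 < n" "n - 2 \<noteq> n - 1" using n2 by auto
  have LC: "mB (n-1) \<le> 2 * u"
  proof -
    define a' where "a' = a (n-1)"
    define b' where "b' = b (n-1)"
    have a'0: "0 \<le> a'" and b'1: "b' \<le> 1" using ab[OF n1(1)] by (auto simp: a'_def b'_def)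
    have mf: "mB (n-1) = max 0 (min b' ((2 * real n - 2) * u) - max a' 0) + max 0 (min b' 1 - max a' ((2 * real n - 1) * u))"
      using mBf[OF n1(1)] by (simp add: a'_def b'_def)
    consider "a' < (2 * real n - 2) * u \<and> b' > (2 * real n - 1) * u" | "a' \<ge> (2 * real n - 2) * u" | "b' \<le> (2 * real n - 1) * u"
      by linarith
    then show ?thesis
    proof cases
      case 1
      have "measure (vv n (n-2)) (x (n-1)) = measure L (AC n \<inter> x (n-1)) / uu n"
        using uC[OF n2 xL[OF n1(1)]] .
      also have "measure L (AC n \<inter> x (n-1)) = max 0 (min b' ((2 * real n - 1) * u) - max a' ((2 * real n - 2) * u))"
        using ab[OF n1(1)] meas_AC_Ioo[OF n2] by (simp add: a'_def b'_def u_def)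
      also have "\<dots> = u" using 1 u0 by (simp add: algebra_simps min_def max_def)
      finally have "measure (vv n (n-2)) (x (n-1)) = 1" using u0 by (simp add: u_def)
      moreover have "measure (vv n (n-2)) (x (n-1)) \<le> measure (vv n (n-2)) (x (n-2))"
        using ef[OF n1(2) n1(1)] .
      moreover have "measure (vv n (n-2)) (x (n-2)) + measure (vv n (n-2)) (x (n-1)) \<le> 1"
        using ps[OF n1(2) n1(1) n1(3)] .
      ultimately show ?thesis by linarith
    next
      case 2
      have "min b' ((2 * real n - 2) * u) - max a' 0 \<le> 0" using 2 a'0 by (simp add: min_def max_def)
      moreover have "min b' 1 - max a' ((2 * real n - 1) * u) \<le> 2 * u"
        using u1 by (simp add: min_def max_def algebra_simps)
      ultimately show ?thesis using mf u0 by (simp add: max_def)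
    next
      case 3
      have t2: "max 0 (min b' 1 - max a' ((2 * real n - 1) * u)) = 0" using 3 by (simp add: min_def max_def)
      show ?thesis
      proof (rule ccontr)
        assume "\<not> mB (n-1) \<le> 2 * u"
        then have big: "min b' ((2 * real n - 2) * u) - a' > 2 * u" using mf t2 a'0 u0 by (simp add: max_def split: if_splits)
        define k where "k = nat \<lfloor>a' / (2 * u)\<rfloor>"
        have kfl: "real k \<le> a' / (2 * u)" "a' / (2 * u) < real k + 1"
          using a'0 u0 by (simp_all add: k_def)
        have ka: "2 * (real k * u) \<le> a'" "a' < 2 * (real k * u) + 2 * u"
          using kfl u0 by (simp_all add: field_simps)
        have "2 * (real k * u) < (2 * real n - 4) * u" using ka big by (simp add: min_def algebra_simps split: if_splits)
        then have "2 * real k < 2 * real n - 4" using u0 by (simp add: mult.commute)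
        then have kn: "k < n - 2" by linarith
        have r: "min b' (2 * (real k * u) + 3 * u) - max a' (2 * (real k * u) + u) > u"
          by (rule ar1) (use u0 ka big in \<open>auto simp: min_def split: if_splits\<close>)
        have e1: "(2 * real k + 3) * uu n = 2 * (real k * u) + 3 * u" "(2 * real k + 1) * uu n = 2 * (real k * u) + u"
          by (simp_all add: u_def algebra_simps)
        have "measure L (AP n k \<inter> x (n-1)) = max 0 (min b' ((2 * real k + 3) * uu n) - max a' ((2 * real k + 1) * uu n))"
          using meas_AP_Ioo[OF kn, of a' b'] ab[OF n1(1)] by (simp add: a'_def b'_def)
        also have "\<dots> = max 0 (min b' (2 * (real k * u) + 3 * u) - max a' (2 * (real k * u) + u))"
          by (simp only: e1)
        finally have "measure L (AP n k \<inter> x (n-1)) > u" using r by simp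
        then have "measure L (AP n k \<inter> x (n-1)) / (2 * u) > u / (2 * u)"
          using u0 by (intro divide_strict_right_mono) auto
        then have gt: "measure (vv n k) (x (n-1)) > 1/2"
          using uP[OF kn xL[OF n1(1)]] u0 by (simp add: u_def)
        have kn': "k < n" "k \<noteq> n - 1" using kn by auto
        have "measure (vv n k) (x (n-1)) \<le> measure (vv n k) (x k)" using ef[OF kn'(1) n1(1)] .
        moreover have "measure (vv n k) (x k) + measure (vv n k) (x (n-1)) \<le> 1" using ps[OF kn'(1) n1(1) kn'(2)] .
        ultimately show False using gt by linarith
      qed
    qed
  qed
  have cnt: "(\<Sum>j<n. mB j) = real n * (2 * u)"
  proof -
    have t1: "\<forall>i<n. 1 \<notin> x i" using ab by fastforce
    have "measure L (AB n \<inter> {..1}) = (\<Sum>i\<in>{i. i<n \<and> x i \<subseteq> {..1}}. measure L (AB n \<inter> x i))"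
      by (rule tiling[OF div cpl]) (use t1 AB_sets[OF n2] in auto)
    moreover have "{i. i<n \<and> x i \<subseteq> {..1}} = {..<n}" using ab by fastforce
    moreover have "AB n \<inter> {..1} = AB n" using AB_sets[OF n2] by (auto simp: sets_L_iff)
    ultimately have "measure L (AB n) = (\<Sum>j<n. mB j)" by (simp add: mB_def)
    then show ?thesis using AB_measure[OF n2] by (simp add: u_def)
  qed
  have mBle: "\<forall>j<n. mB j \<le> 2 * u"
  proof (intro allI impI)
    fix j assume j: "j < n"
    have "mB j / (2 * real n * u) \<le> mB (n-1) / (2 * real n * u)"
      using ef[OF n1(1) j] uBx[OF j] uBx[OF n1(1)] by simp
    then have "mB j \<le> mB (n-1)" using u0 n2 by (simp add: divide_right_mono_neg divide_le_cancel)
    then show "mB j \<le> 2 * u" using LC by linarith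
  qed
  have mBeq: "\<And>j. j<n \<Longrightarrow> mB j = 2 * u" using sum_eq_bound[OF cnt mBle] by blast
  have ne: "\<And>j. j<n \<Longrightarrow> a j < b j"
  proof (rule ccontr)
    fix j assume j: "j<n" and "\<not> a j < b j"
    then have "x j = {}" using ab[OF j] by auto
    then have "mB j = 0" by (simp add: mB_def)
    then show False using mBeq[OF j] u0 by simp
  qed
  have endp: "\<And>j. j<n \<Longrightarrow> a j \<le> (2 * real n - 2) * u \<Longrightarrow> \<exists>m::nat. a j = 2 * real m * u"
  proof -
    fix j assume j: "j<n" and aj: "a j \<le> (2 * real n - 2) * u"
    have notin: "\<forall>i<n. a j \<notin> x i"
    proof (intro allI impI notI)
      fix i assume i: "i<n" and ai: "a j \<in> x i"
      show False
      proof (cases "i = j")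
        case True then show False using ai ab[OF j] by simp
      next
        case False
        define q where "q = (a j + min (b i) (b j)) / 2"
        have "a i < a j" "a j < b i" using ai ab[OF i] by auto
        then have "q \<in> x i" "q \<in> x j" using ab[OF i] ab[OF j] ne[OF j] by (auto simp: q_def min_def)
        then show False using disj[OF i j False] by auto
      qed
    qed
    have "measure L (AB n \<inter> {..a j}) = (\<Sum>i\<in>{i. i<n \<and> x i \<subseteq> {..a j}}. measure L (AB n \<inter> x i))"
      by (rule tiling[OF div cpl]) (use notin AB_sets[OF n2] ab[OF j] ne[OF j] in auto)
    also have "\<dots> = (\<Sum>i\<in>{i. i<n \<and> x i \<subseteq> {..a j}}. 2 * u)"
      by (rule sum.cong) (auto simp: mBeq[unfolded mB_def])
    also have "\<dots> = real (card {i. i<n \<and> x i \<subseteq> {..a j}}) * (2 * u)" by simp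
    finally have "measure L (AB n \<inter> {..a j}) = real (card {i. i<n \<and> x i \<subseteq> {..a j}}) * (2 * u)" .
    moreover have "measure L (AB n \<inter> {..a j}) = a j"
      by (rule meas_AB_Iic[OF n2]) (use ab[OF j] aj in \<open>auto simp: u_def\<close>)
    ultimately show "\<exists>m::nat. a j = 2 * real m * u" by (intro exI[of _ "card {i. i<n \<and> x i \<subseteq> {..a j}}"]) simp
  qed
  have Bval: "measure (vv n (n-1)) (x (n-1)) = 1 / real n"
    using uBx[OF n1(1)] mBeq[OF n1(1)] u0 n2 by simp
  have Pk: "measure (vv n k) (x k) = 1/2" if kn: "k < n - 2" for k
  proof -
    have kn': "k < n" using kn by simp
    define K where "K = real k * u"
    define P where "P = real n * u"
    have kr: "real k + 3 \<le> real n" using kn by linarith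
    then have "(real k + 3) * u \<le> real n * u" using u0 by (intro mult_right_mono) auto
    then have kru: "K + 3 * u \<le> P" by (simp add: K_def P_def algebra_simps)
    have K0: "0 \<le> K" using u0 by (simp add: K_def)
    have e1: "(2 * real k + 3) * uu n = 2 * K + 3 * u" "(2 * real k + 1) * uu n = 2 * K + u"
      by (simp_all add: u_def K_def algebra_simps)
    have e2: "(2 * real n - 2) * u = 2 * P - 2 * u" "(2 * real n - 1) * u = 2 * P - u"
      by (simp_all add: P_def algebra_simps)
    have P1: "2 * P + u = 1" using u1 by (simp add: P_def algebra_simps)
    have APf: "\<And>j. j<n \<Longrightarrow> measure L (AP n k \<inter> x j) = max 0 (min (b j) (2 * K + 3 * u) - max (a j) (2 * K + u))"
    proof -
      fix j assume j: "j<n"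
      have "measure L (AP n k \<inter> x j) = max 0 (min (b j) ((2 * real k + 3) * uu n) - max (a j) ((2 * real k + 1) * uu n))"
        using meas_AP_Ioo[OF kn, of "a j" "b j"] ab[OF j] by simp
      then show "measure L (AP n k \<inter> x j) = max 0 (min (b j) (2 * K + 3 * u) - max (a j) (2 * K + u))"
        by (simp only: e1)
    qed
    have uPx: "\<And>j. j<n \<Longrightarrow> measure (vv n k) (x j) = measure L (AP n k \<inter> x j) / (2 * u)"
      using uP[OF kn] xL by (simp add: u_def)
    have mBf': "\<And>j. j<n \<Longrightarrow> mB j = max 0 (min (b j) (2 * P - 2 * u) - max (a j) 0) + max 0 (min (b j) 1 - max (a j) (2 * P - u))"
      using mBf by (simp only: e2)
    have endp': "\<And>j. j<n \<Longrightarrow> a j \<le> 2 * P - 2 * u \<Longrightarrow> \<exists>m::nat. a j = 2 * (real m * u)"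
      using endp e2 by (metis mult.assoc)
    have notcross: "\<not> (a k < 2 * K + 2 * u \<and> 2 * K + 2 * u < b k)"
    proof
      assume c: "a k < 2 * K + 2 * u \<and> 2 * K + 2 * u < b k"
      have "a k \<le> 2 * P - 2 * u" using c kru u0 by linarith
      then obtain m :: nat where m: "a k = 2 * (real m * u)" using endp'[OF kn'] by blast
      define M where "M = real m * u"
      have "real m * u < (real k + 1) * u" using c m by (simp add: K_def algebra_simps)
      then have "real m < real k + 1" using u0 by (simp add: mult_less_cancel_right)
      then have "m \<le> k" by linarith
      then have mk: "M \<le> K" using u0 by (simp add: mult_right_mono M_def K_def)
      have M0: "0 \<le> M" using u0 by (simp add: M_def)
      have am: "a k = 2 * M" using m by (simp add: M_def)
      have "mB k > 2 * u"
        using mBf'[OF kn'] c am mk M0 kru u0 by (auto simp: max_def min_def split: if_splits)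
      then show False using mBeq[OF kn'] by simp
    qed
    have "measure L (AP n k \<inter> x k) \<le> u"
      using APf[OF kn'] notcross u0 by (auto simp: max_def min_def split: if_splits)
    then have up: "measure (vv n k) (x k) \<le> 1/2"
      using uPx[OF kn'] u0 by (simp add: divide_le_eq)
    define p where "p = 2 * K + 3/2 * u"
    have p01: "p \<in> {0..1}" using kru u0 P1 K0 by (simp add: p_def)
    then have "p \<in> (\<Union>i<n. closure (x i))" using cpl by (simp add: complete_div_def)
    then obtain j where j: "j<n" "p \<in> closure (x j)" by auto
    have clj: "closure (x j) = {a j..b j}" using ab[OF j(1)] ne[OF j(1)] by simp
    have ajp: "a j \<le> p" "p \<le> b j" using j(2) clj by auto
    have "a j \<le> 2 * P - 2 * u" using ajp kru u0 by (simp add: p_def)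
    then obtain m :: nat where m: "a j = 2 * (real m * u)" using endp'[OF j(1)] by blast
    define M where "M = real m * u"
    have am: "a j = 2 * M" using m by (simp add: M_def)
    have "real m * u < (real k + 1) * u" using ajp m u0 by (simp add: p_def K_def algebra_simps)
    then have "real m < real k + 1" using u0 by (simp add: mult_less_cancel_right)
    then have mk0: "m \<le> k" by linarith
    then have mk: "M \<le> K" using u0 by (simp add: mult_right_mono M_def K_def)
    have M0: "0 \<le> M" using u0 by (simp add: M_def)
    have bj: "b j \<ge> 2 * K + 2 * u"
    proof (rule ccontr)
      assume "\<not> b j \<ge> 2 * K + 2 * u"
      then have bl: "b j < 2 * K + 2 * u" by simp
      have "mB j = b j - 2 * M"
        using mBf'[OF j(1)] bl am mk M0 kru u0 ab[OF j(1)] ne[OF j(1)] by (auto simp: max_def min_def split: if_splits)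
      then have bm: "b j = 2 * M + 2 * u" using mBeq[OF j(1)] by simp
      then have "(real k - 1) * u < real m * u" using ajp u0 by (simp add: p_def K_def M_def algebra_simps)
      then have "real k - 1 < real m" using u0 by (simp add: mult_less_cancel_right)
      then have "m = k" using mk0 by linarith
      then have "M = K" by (simp add: M_def K_def)
      then show False using bl bm by simp
    qed
    have "measure L (AP n k \<inter> x j) \<ge> u"
      using APf[OF j(1)] bj am mk u0 by (auto simp: max_def min_def split: if_splits)
    then have "measure (vv n k) (x j) \<ge> 1/2"
      using uPx[OF j(1)] u0 by (simp add: le_divide_eq)
    then have "measure (vv n k) (x k) \<ge> 1/2" using ef[OF kn' j(1)] by linarith
    then show ?thesis using up by linarith
  qed
  show ?thesis using Pk Bval by blast
qed

definition yy :: "nat \<Rightarrow> nat \<Rightarrow> real set" where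
  "yy n i = (if i < n - 2 then {(2 * real i + 1) * uu n <..< (2 * real i + 3) * uu n}
     else if i = n - 2 then {(2 * real n - 2) * uu n <..< (2 * real n - 1) * uu n}
     else {(2 * real n - 1) * uu n <..< 1})"

lemma yy_cases:
  assumes "n > 2"
  shows "k < n - 2 \<Longrightarrow> yy n k = {(2 * real k + 1) * uu n <..< (2 * real k + 3) * uu n}"
    "yy n (n - 2) = {(2 * real n - 2) * uu n <..< (2 * real n - 1) * uu n}"
    "yy n (n - 1) = {(2 * real n - 1) * uu n <..< 1}"
  using assms by (auto simp: yy_def)

lemma yy_osi:
  assumes n2: "n > 2" and i: "i < n"
  shows "open_subinterval (yy n i)"
proof -
  define u where "u = uu n"
  have u0: "0 < u" and u1: "u + u * (real n * 2) = 1" and u3: "3 * u \<le> u * real n"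
    using uf[OF n2] by (simp_all add: u_def)
  consider "i < n - 2" | "i = n - 2" | "i = n - 1" using i by linarith
  then show ?thesis
  proof cases
    case 1
    have "real i + 3 \<le> real n" using 1 by linarith
    then have "(real i + 3) * u \<le> real n * u" using u0 by (intro mult_right_mono) auto
    then have "(2 * real i + 3) * u \<le> 1" using u1 u0 by (simp add: algebra_simps)
    moreover have "0 \<le> (2 * real i + 1) * u" using u0 by simp
    ultimately show ?thesis unfolding open_subinterval_def yy_cases(1)[OF n2 1]
      by (intro exI[of _ "(2 * real i + 1) * u"] exI[of _ "(2 * real i + 3) * u"]) (simp add: u_def)
  next
    case 2
    have "0 \<le> (2 * real n - 2) * u" "(2 * real n - 1) * u \<le> 1" using u0 u1 u3 by (simp_all add: algebra_simps)
    then show ?thesis unfolding 2 open_subinterval_def yy_cases(2)[OF n2]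
      by (intro exI[of _ "(2 * real n - 2) * u"] exI[of _ "(2 * real n - 1) * u"]) (simp add: u_def)
  next
    case 3
    have "0 \<le> (2 * real n - 1) * u" using u0 u1 u3 by (simp_all add: algebra_simps)
    then show ?thesis unfolding 3 open_subinterval_def yy_cases(3)[OF n2]
      by (intro exI[of _ "(2 * real n - 1) * u"] exI[of _ "1"]) (simp add: u_def)
  qed
qed

lemma yy_sets: "n > 2 \<Longrightarrow> i < n \<Longrightarrow> yy n i \<in> sets L"
  using yy_osi osi_sets by blast

lemma le1: assumes "n > 2" "i < n" "S \<in> sets L" shows "measure (vv n i) S \<le> 1"
proof -
  interpret prob_space "vv n i" using vv_val[OF assms(1,2)] by (simp add: valuation_def)
  show ?thesis by (rule prob_le_1)
qed

lemma yy_sub: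
  assumes n2: "n > 2" and i: "i < n"
  shows "yy n i \<subseteq> {(2 * real i + 1) * uu n <..< (2 * real i + 3) * uu n}"
proof -
  define u where "u = uu n"
  have u0: "0 < u" and u1: "u + u * (real n * 2) = 1" using uf[OF n2] by (simp_all add: u_def)
  consider "i < n - 2" | "i = n - 2" | "i = n - 1" using i by linarith
  then show ?thesis
  proof cases
    case 1 then show ?thesis using yy_cases(1)[OF n2 1] by simp
  next
    case 2
    have r: "real (n - 2) = real n - 2" using n2 by simp
    have "(2 * real n - 3) * u \<le> (2 * real n - 2) * u" using u0 by (simp add: algebra_simps)
    then show ?thesis using 2 yy_cases(2)[OF n2] r by (auto simp: u_def algebra_simps)
  next
    case 3
    have r: "real (n - 1) = real n - 1" using n2 by simp
    have "(2 * real n + 1) * u = 1" using u1 by (simp add: algebra_simps)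
    then show ?thesis using 3 yy_cases(3)[OF n2] r by (auto simp: u_def algebra_simps)
  qed
qed

lemma yy_disj:
  assumes n2: "n > 2" and i: "i < n" and j: "j < n" and ij: "i \<noteq> j"
  shows "yy n i \<inter> yy n j = {}"
proof -
  define u where "u = uu n"
  have u0: "0 < u" using uf[OF n2] by (simp add: u_def)
  have W: "{(2 * real i + 1) * u <..< (2 * real i + 3) * u} \<inter> {(2 * real j + 1) * u <..< (2 * real j + 3) * u} = {}"
  proof (cases "i < j")
    case True
    then have "real i + 1 \<le> real j" by linarith
    then have "(real i + 1) * u \<le> real j * u" using u0 by (intro mult_right_mono) auto
    then have "(2 * real i + 3) * u \<le> (2 * real j + 1) * u" by (simp add: algebra_simps)
    then show ?thesis by auto
  next
    case False
    then have "real j + 1 \<le> real i" using ij by linarith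
    then have "(real j + 1) * u \<le> real i * u" using u0 by (intro mult_right_mono) auto
    then have "(2 * real j + 3) * u \<le> (2 * real i + 1) * u" by (simp add: algebra_simps)
    then show ?thesis by auto
  qed
  then show ?thesis using yy_sub[OF n2 i] yy_sub[OF n2 j] unfolding u_def by blast
qed

lemma yy_notcomplete:
  assumes n2: "n > 2"
  shows "\<not> complete_div n (yy n)"
proof
  assume c: "complete_div n (yy n)"
  define u where "u = uu n"
  have u0: "0 < u" and u1: "u + u * (real n * 2) = 1" using uf[OF n2] by (simp_all add: u_def)
  have "u / 2 \<in> {0..1}" using u0 u1 by simp (smt (verit) mult_nonneg_nonneg of_nat_0_le_iff)
  then have "u / 2 \<in> (\<Union>i<n. closure (yy n i))" using c by (simp add: complete_div_def)
  then obtain i where i: "i < n" "u / 2 \<in> closure (yy n i)" by auto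
  have "closure (yy n i) \<subseteq> closure {(2 * real i + 1) * u <..< (2 * real i + 3) * u}"
    using yy_sub[OF n2 i(1)] by (simp add: u_def closure_mono)
  also have "\<dots> \<subseteq> {(2 * real i + 1) * u .. (2 * real i + 3) * u}"
    by (rule closure_minimal) auto
  finally have "(2 * real i + 1) * u \<le> u / 2" using i(2) by auto
  moreover have "u \<le> (2 * real i + 1) * u" using u0 by simp
  ultimately show False using u0 by simp
qed

lemma yvals:
  assumes n2: "n > 2"
  shows "\<And>i. i < n - 2 \<Longrightarrow> measure (vv n i) (yy n i) = 1"
    "measure (vv n (n-2)) (yy n (n-2)) = 1"
    "measure (vv n (n-1)) (yy n (n-1)) = 1 / real n"
    "\<And>j. j < n - 2 \<Longrightarrow> measure (vv n (n-1)) (yy n j) = 1 / real n"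
    "measure (vv n (n-1)) (yy n (n-2)) = 0"
proof -
  define u where "u = uu n"
  define P where "P = real n * u"
  have u0: "0 < u" and u1: "u + u * (real n * 2) = 1" and u3: "3 * u \<le> u * real n"
    using uf[OF n2] by (simp_all add: u_def)
  have P1: "2 * P + u = 1" using u1 by (simp add: P_def algebra_simps)
  have P3: "3 * u \<le> P" using u3 by (simp add: P_def algebra_simps)
  have e2: "(2 * real n - 2) * u = 2 * P - 2 * u" "(2 * real n - 1) * u = 2 * P - u"
    by (simp_all add: P_def algebra_simps)
  have nlt: "n - 1 < n" "n - 2 < n" using n2 by auto
  have Bdiv: "\<And>z. z / (2 * real n * u) = z / (2 * P)" by (simp add: P_def algebra_simps)
  have twoP: "2 * u / (2 * P) = 1 / real n" using u0 n2 by (simp add: P_def)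
  show "measure (vv n i) (yy n i) = 1" if i: "i < n - 2" for i
  proof -
    have "measure (vv n i) (yy n i) = measure L (AP n i \<inter> yy n i) / (2 * uu n)"
      using uP[OF i yy_sets[OF n2]] i by simp
    also have "measure L (AP n i \<inter> yy n i) = 2 * uu n"
      using meas_AP_Ioo[OF i] yy_cases(1)[OF n2 i] uu_pos[of n] by (simp add: algebra_simps)
    finally show ?thesis using uu_pos[of n] by simp
  qed
  show "measure (vv n (n-2)) (yy n (n-2)) = 1"
  proof -
    have "measure (vv n (n-2)) (yy n (n-2)) = measure L (AC n \<inter> yy n (n-2)) / uu n"
      using uC[OF n2 yy_sets[OF n2 nlt(2)]] .
    also have "measure L (AC n \<inter> yy n (n-2)) = uu n"
      using meas_AC_Ioo[OF n2] yy_cases(2)[OF n2] uu_pos[of n] by (simp add: algebra_simps)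
    finally show ?thesis using uu_pos[of n] by simp
  qed
  show "measure (vv n (n-1)) (yy n (n-1)) = 1 / real n"
  proof -
    have "measure (vv n (n-1)) (yy n (n-1)) = measure L (AB n \<inter> yy n (n-1)) / (2 * real n * uu n)"
      using uB[OF n2 yy_sets[OF n2 nlt(1)]] .
    also have "measure L (AB n \<inter> yy n (n-1)) = 2 * u"
      unfolding yy_cases(3)[OF n2] meas_AB_Ioo[OF n2] u_def[symmetric] e2
      using P1 P3 u0 by (auto simp: max_def min_def split: if_splits)
    finally show ?thesis using uu_pos[of n] n2 by (simp add: u_def)
  qed
  show "measure (vv n (n-1)) (yy n j) = 1 / real n" if j: "j < n - 2" for j
  proof -
    define K where "K = real j * u"
    have "(real j + 3) * u \<le> real n * u" using j u0 by (intro mult_right_mono) auto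
    then have K3: "K + 3 * u \<le> P" by (simp add: K_def P_def algebra_simps)
    have K0: "0 \<le> K" using u0 by (simp add: K_def)
    have e1: "(2 * real j + 3) * u = 2 * K + 3 * u" "(2 * real j + 1) * u = 2 * K + u"
      by (simp_all add: K_def algebra_simps)
    have jn: "j < n" using j by simp
    have "measure (vv n (n-1)) (yy n j) = measure L (AB n \<inter> yy n j) / (2 * real n * uu n)"
      using uB[OF n2 yy_sets[OF n2 jn]] .
    also have "measure L (AB n \<inter> yy n j) = 2 * u"
      unfolding yy_cases(1)[OF n2 j] meas_AB_Ioo[OF n2] u_def[symmetric] e2 e1
      using P1 K3 K0 u0 by (auto simp: max_def min_def split: if_splits)
    finally show ?thesis using uu_pos[of n] n2 by (simp add: u_def)
  qed
  show "measure (vv n (n-1)) (yy n (n-2)) = 0"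
  proof -
    have "measure (vv n (n-1)) (yy n (n-2)) = measure L (AB n \<inter> yy n (n-2)) / (2 * real n * uu n)"
      using uB[OF n2 yy_sets[OF n2 nlt(2)]] .
    also have "measure L (AB n \<inter> yy n (n-2)) = 0"
      unfolding yy_cases(2)[OF n2] meas_AB_Ioo[OF n2] u_def[symmetric] e2
      using P1 P3 u0 by (auto simp: max_def min_def split: if_splits)
    finally show ?thesis by simp
  qed
qed

theorem theorem5:
  fixes n :: nat
  assumes "n > 2"
  shows "\<exists>v :: nat \<Rightarrow> real measure. (\<forall>i<n. valuation (v i)) \<and>
    (\<exists>y. division n y \<and> \<not> complete_div n y \<and> envy_free n v y \<and>
      (\<forall>x. division n x \<and> complete_div n x \<and> envy_free n v x \<longrightarrow>
        (\<exists>S \<subseteq> {..<n}. card S = n - 2 \<and>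
           (\<forall>i\<in>S. util v y i i = 2 * util v x i i \<and> util v x i i > 0) \<and>
           (\<forall>i\<in>{..<n} - S. util v y i i \<ge> util v x i i))))"
proof (rule exI[of _ "vv n"], intro conjI)
  have n2: "n > 2" by (rule assms)
  show "\<forall>i<n. valuation (vv n i)" using vv_val[OF n2] by blast
  have nlt: "n - 1 < n" "n - 2 < n" using n2 by auto
  show "\<exists>y. division n y \<and> \<not> complete_div n y \<and> envy_free n (vv n) y \<and>
      (\<forall>x. division n x \<and> complete_div n x \<and> envy_free n (vv n) x \<longrightarrow>
        (\<exists>S \<subseteq> {..<n}. card S = n - 2 \<and>
           (\<forall>i\<in>S. util (vv n) y i i = 2 * util (vv n) x i i \<and> util (vv n) x i i > 0) \<and>
           (\<forall>i\<in>{..<n} - S. util (vv n) y i i \<ge> util (vv n) x i i)))"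
  proof (rule exI[of _ "yy n"], intro conjI allI impI)
  show "division n (yy n)" unfolding division_def using yy_osi[OF n2] yy_disj[OF n2] by blast
  show "\<not> complete_div n (yy n)" by (rule yy_notcomplete[OF n2])
  show "envy_free n (vv n) (yy n)"
    unfolding envy_free_def util_def
  proof (intro allI impI)
    fix i j assume i: "i < n" and j: "j < n"
    consider "i < n - 2" | "i = n - 2" | "i = n - 1" using i by linarith
    then show "measure (vv n i) (yy n j) \<le> measure (vv n i) (yy n i)"
    proof cases
      case 1 then show ?thesis using yvals(1)[OF n2 1] le1[OF n2 i yy_sets[OF n2 j]] by simp
    next
      case 2 then show ?thesis using yvals(2)[OF n2] le1[OF n2 i yy_sets[OF n2 j]] by simp
    next
      case 3
      consider "j < n - 2" | "j = n - 2" | "j = n - 1" using j by linarith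
      then show ?thesis
      proof cases
        case 1 then show ?thesis using 3 yvals(3,4)[OF n2] by simp
      next
        case 2 then show ?thesis using 3 yvals(3,5)[OF n2] by simp
      next
        case jj: 3 then show ?thesis using 3 by simp
      qed
    qed
  qed
  fix x assume x: "division n x \<and> complete_div n x \<and> envy_free n (vv n) x"
  have xs: "(\<forall>k<n-2. measure (vv n k) (x k) = 1/2) \<and> measure (vv n (n-1)) (x (n-1)) = 1 / real n"
    using xstruct[OF n2] x by blast
  have xL: "\<And>i. i<n \<Longrightarrow> x i \<in> sets L" using x osi_sets by (auto simp: division_def)
  show "\<exists>S \<subseteq> {..<n}. card S = n - 2 \<and>
           (\<forall>i\<in>S. util (vv n) (yy n) i i = 2 * util (vv n) x i i \<and> util (vv n) x i i > 0) \<and>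
           (\<forall>i\<in>{..<n} - S. util (vv n) (yy n) i i \<ge> util (vv n) x i i)"
  proof (intro exI[of _ "{..<n-2}"] conjI ballI)
    show "{..<n-2} \<subseteq> {..<n}" by auto
    show "card {..<n-2} = n - 2" by simp
    fix i assume "i \<in> {..<n-2}"
    then have i: "i < n - 2" by simp
    have h: "measure (vv n i) (x i) = 1/2" using xs i by blast
    then show "util (vv n) (yy n) i i = 2 * util (vv n) x i i" using yvals(1)[OF n2 i] by (simp add: util_def)
    show "util (vv n) x i i > 0" using h by (simp add: util_def)
  next
    fix i assume "i \<in> {..<n} - {..<n-2}"
    then have "i = n - 2 \<or> i = n - 1" by auto
    then show "util (vv n) (yy n) i i \<ge> util (vv n) x i i"
    proof
      assume i: "i = n - 2"
      show ?thesis using yvals(2)[OF n2] le1[OF n2 nlt(2) xL[OF nlt(2)]] i by (simp add: util_def)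
    next
      assume i: "i = n - 1"
      show ?thesis using yvals(3)[OF n2] xs i by (simp add: util_def)
    qed
  qed
  qed
qed

end
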